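(* Let $N\ge 1$, let $\mathbf{A}=[a_{ij}]$ and $\mathbf{B}=[b_{ij}]$ be the adjacency matrices of two undirected, connected graphs on the node set $\{1,\dots,N\}$, and let $\beta_1,\delta_1,\beta_2,\delta_2>0$ with $\tau_1=\beta_1/\delta_1$, $\tau_2=\beta_2/\delta_2$. Consider the bi-virus system $$\dot{\mathbf{x}}=\beta_1\,\mathrm{diag}(\mathbf{1}-\mathbf{x}-\mathbf{y})\mathbf{A}\mathbf{x}-\delta_1\mathbf{x},\qquad \dot{\mathbf{y}}=\beta_2\,\mathrm{diag}(\mathbf{1}-\mathbf{x}-\mathbf{y})\mathbf{B}\mathbf{y}-\delta_2\mathbf{y}$$ on $D=\{(\mathbf{x},\mathbf{y})\in[0,1]^{2N}:\mathbf{x}+\mathbf{y}\le\mathbf{1}\}$. If $\tau_1\lambda(\mathbf{A})\le 1$ and $\tau_2\lambda(\mathbf{B})\le 1$, then every trajectory of this system starting from any point of $D$ converges to $(\mathbf{0},\mathbf{0})$.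
   Context: $\lambda(\mathbf{M})$ denotes the largest real part of the eigenvalues of a square matrix $\mathbf{M}$ (for a nonnegative matrix this is its spectral radius). $\mathrm{diag}(\mathbf{v})$ is the diagonal matrix with the entries of $\mathbf{v}$ on the diagonal; $\mathbf{1}$ and $\mathbf{0}$ are the all-ones and all-zeros vectors in $\mathbb{R}^N$; vector inequalities are entrywise. *)

theory Defs
  imports "HOL-Analysis.Analysis"
begin

definition diagm :: "real ^ 'n \<Rightarrow> real ^ 'n ^ 'n" where
  "diagm v = (\<chi> i j. if i = j then v $ i else 0)"

definition eigenvalues_of :: "real ^ 'n ^ 'n \<Rightarrow> complex set" where
  "eigenvalues_of M = {c. \<exists>v :: complex ^ 'n. v \<noteq> 0 \<and>
      (\<chi> i j. complex_of_real (M $ i $ j)) *v v = c *s v}"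

definition lambda_max :: "real ^ 'n ^ 'n \<Rightarrow> real" where
  "lambda_max M = Max (Re ` eigenvalues_of M)"

definition undirected_adjacency :: "real ^ 'n ^ 'n \<Rightarrow> bool" where
  "undirected_adjacency A \<longleftrightarrow>
     (\<forall>i j. A $ i $ j = 0 \<or> A $ i $ j = 1) \<and>
     (\<forall>i j. A $ i $ j = A $ j $ i) \<and>
     (\<forall>i. A $ i $ i = 0)"

definition connected_adjacency :: "real ^ 'n ^ 'n \<Rightarrow> bool" where
  "connected_adjacency A \<longleftrightarrow> (\<forall>i j. (i, j) \<in> {(k, l). A $ k $ l \<noteq> 0}\<^sup>*)"

definition biv_domain :: "((real, 'n::finite) vec * (real, 'n) vec) set" where
  "biv_domain = {(x, y). (\<forall>i. 0 \<le> x $ i \<and> x $ i \<le> 1 \<and> 0 \<le> y $ i \<and> y $ i \<le> 1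
                              \<and> x $ i + y $ i \<le> 1)}"

definition biv_field_x :: "real \<Rightarrow> real \<Rightarrow> real ^ 'n ^ 'n \<Rightarrow> real ^ 'n \<Rightarrow> real ^ 'n \<Rightarrow> real ^ 'n" where
  "biv_field_x \<beta> \<delta> A x y = \<beta> *\<^sub>R (diagm (vec 1 - x - y) *v (A *v x)) - \<delta> *\<^sub>R x"

end

theory Submission
  imports Defs
begin


lemma eig_indep:
  fixes M :: "complex ^ 'n ^ 'n" and v :: "complex \<Rightarrow> complex ^ 'n"
  assumes "finite F" "\<And>c. c \<in> F \<Longrightarrow> M *v v c = c *s v c \<and> v c \<noteq> 0"
  shows "\<forall>u. (\<Sum>c\<in>F. u c *s v c) = 0 \<longrightarrow> (\<forall>c\<in>F. u c = 0)"
  using assms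
proof (induction F rule: finite_induct)
  case empty
  then show ?case by simp
next
  case (insert c0 F)
  show ?case
  proof (intro allI impI)
    fix u assume h: "(\<Sum>c\<in>insert c0 F. u c *s v c) = 0"
    have h1: "u c0 *s v c0 + (\<Sum>c\<in>F. u c *s v c) = 0" using h insert by simp
    have "M *v (u c0 *s v c0 + (\<Sum>c\<in>F. u c *s v c)) = 0" using h1 by simp
    then have h2: "u c0 *s (c0 *s v c0) + (\<Sum>c\<in>F. u c *s (c *s v c)) = 0"
      using insert.prems
      by (simp add: vec.linear_add[OF matrix_vector_mul_linear_gen] vec.linear_sum[OF matrix_vector_mul_linear_gen]
          vec.linear_scale[OF matrix_vector_mul_linear_gen])
    have "c0 *s (u c0 *s v c0 + (\<Sum>c\<in>F. u c *s v c)) = 0" using h1 by simp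
    then have h3: "u c0 *s (c0 *s v c0) + (\<Sum>c\<in>F. (c0 * u c) *s v c) = 0"
      by (simp add: vec.scale_right_distrib vec.scale_sum_right vec.scale_scale mult.commute)
    have "(\<Sum>c\<in>F. ((c - c0) * u c) *s v c) = (\<Sum>c\<in>F. u c *s (c *s v c)) - (\<Sum>c\<in>F. (c0 * u c) *s v c)"
      by (simp add: sum_subtractf[symmetric] vec.scale_scale algebra_simps vec.scale_left_diff_distrib)
    also have "\<dots> = 0" using h2 h3 by (metis add_left_cancel diff_self)
    finally have "\<forall>c\<in>F. (c - c0) * u c = 0"
      using insert.IH[rule_format, of "\<lambda>c. (c - c0) * u c"] insert.prems by auto
    then have z: "\<forall>c\<in>F. u c = 0" using insert.hyps by auto
    then have "u c0 *s v c0 = 0" using h1 by simp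
    then have "u c0 = 0" using insert.prems by (auto simp: vec.scale_eq_0_iff)
    then show "\<forall>c\<in>insert c0 F. u c = 0" using z by auto
  qed
qed




lemma eig_finite: "finite (eigenvalues_of (M :: real ^ 'n ^ 'n))"
proof (rule ccontr)
  let ?Mc = "(\<chi> i j. complex_of_real (M $ i $ j)) :: complex ^ 'n ^ 'n"
  let ?E = "eigenvalues_of M"
  define v where "v c = (SOME w. w \<noteq> 0 \<and> ?Mc *v w = c *s w)" for c
  have v: "?Mc *v v c = c *s v c \<and> v c \<noteq> 0" if "c \<in> ?E" for c
  proof -
    have "\<exists>w. w \<noteq> 0 \<and> ?Mc *v w = c *s w" using that unfolding eigenvalues_of_def by auto
    then show ?thesis unfolding v_def by (metis (mono_tags, lifting) someI_ex)
  qed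
  assume "infinite ?E"
  then obtain F where F: "F \<subseteq> ?E" "finite F" "card F = Suc CARD('n)"
    using infinite_arbitrarily_large by blast
  have ind: "\<forall>u. (\<Sum>c\<in>F. u c *s v c) = 0 \<longrightarrow> (\<forall>c\<in>F. u c = 0)"
    by (rule eig_indep[OF F(2)]) (use v F(1) in auto)
  have inj: "inj_on v F"
  proof
    fix a b assume ab: "a \<in> F" "b \<in> F" "v a = v b"
    have "a *s v a = b *s v a" using v[of a] v[of b] F(1) ab by (metis subsetD)
    then have "(a - b) *s v a = 0" by (simp add: vec.scale_left_diff_distrib)
    then show "a = b" using v[of a] ab F(1) by (auto simp: vec.scale_eq_0_iff)
  qed
  have "vec.independent (v ` F)"
  proof (rule vec.independent_if_scalars_zero)
    show "finite (v ` F)" using F by simp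
    fix f x assume s: "(\<Sum>x\<in>v ` F. f x *s x) = 0" and x: "x \<in> v ` F"
    have "(\<Sum>c\<in>F. f (v c) *s v c) = 0" using s by (simp add: sum.reindex[OF inj])
    then show "f x = 0" using ind x by auto
  qed
  then have "card (v ` F) \<le> vec.dim (v ` F)" using vec.independent_bound_general by blast
  also have "\<dots> \<le> CARD('n)" using vec.dim_subset_UNIV by (simp add: vec.dimension_def card_cart_basis)
  finally show False using F card_image[OF inj] by simp
qed




lemma sym_inner:
  fixes A :: "real ^ 'n ^ 'n"
  assumes "\<And>i j. A $ i $ j = A $ j $ i"
  shows "u \<bullet> (A *v w) = w \<bullet> (A *v u)"
proof -
  have "u \<bullet> (A *v w) = (\<Sum>i\<in>UNIV. \<Sum>j\<in>UNIV. u $ i * A $ i $ j * w $ j)"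
    by (simp add: inner_vec_def matrix_vector_mult_def sum_distrib_left mult.assoc)
  also have "\<dots> = (\<Sum>j\<in>UNIV. \<Sum>i\<in>UNIV. u $ i * A $ i $ j * w $ j)" by (rule sum.swap)
  also have "\<dots> = w \<bullet> (A *v u)"
    by (simp add: inner_vec_def matrix_vector_mult_def sum_distrib_left assms mult.commute mult.left_commute)
  finally show ?thesis .
qed


lemma aux: assumes "a + 2*t*b + t^2*c \<le> m*(xx + 2*t*wx + t^2*ww)" "a = m*xx" "ww = b - m*wx" shows "2*t*ww + t^2*(c - m*ww) \<le> (0::real)"
proof -
  have "2*t*ww + t^2*(c - m*ww) = (a + 2*t*b + t^2*c) - m*(xx + 2*t*wx + t^2*ww)"
  proof -
    have b: "b = ww + m*wx" using assms(3) by simp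
    show ?thesis unfolding b assms(2) by (simp add: algebra_simps)
  qed
  then show ?thesis using assms(1) by linarith
qed

lemma lagrange:
  fixes A :: "real ^ 'n ^ 'n"
  assumes sym: "\<And>i j. A $ i $ j = A $ j $ i"
    and le: "\<And>v. v \<bullet> (A *v v) \<le> m * (v \<bullet> v)"
    and eq: "x \<bullet> (A *v x) = m * (x \<bullet> x)"
  shows "A *v x = m *\<^sub>R x"
proof -
  define w where "w = A *v x - m *\<^sub>R x"
  define k where "k = w \<bullet> (A *v w) - m * (w \<bullet> w)"
  have key: "2 * t * (w \<bullet> w) + t^2 * k \<le> 0" for t
  proof -
    have l1: "(x + t *\<^sub>R w) \<bullet> (A *v (x + t *\<^sub>R w)) \<le> m * ((x + t *\<^sub>R w) \<bullet> (x + t *\<^sub>R w))" by (rule le)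
    have e1: "(x + t *\<^sub>R w) \<bullet> (A *v (x + t *\<^sub>R w)) = x \<bullet> (A *v x) + 2 * t * (w \<bullet> (A *v x)) + t^2 * (w \<bullet> (A *v w))"
    proof -
      have "A *v (x + t *\<^sub>R w) = A *v x + t *\<^sub>R (A *v w)" by (simp add: matrix_vector_right_distrib matrix_vector_mult_scaleR)
      then have "(x + t *\<^sub>R w) \<bullet> (A *v (x + t *\<^sub>R w)) = x \<bullet> (A *v x) + t * (x \<bullet> (A *v w)) + t * (w \<bullet> (A *v x)) + t * (t * (w \<bullet> (A *v w)))"
        by (simp add: inner_add_left inner_add_right distrib_left)
      then show ?thesis using sym_inner[OF sym, of x w] by (simp add: power2_eq_square)
    qed
    have e2: "(x + t *\<^sub>R w) \<bullet> (x + t *\<^sub>R w) = x \<bullet> x + 2 * t * (w \<bullet> x) + t^2 * (w \<bullet> w)"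
      by (simp add: inner_add_left inner_add_right power2_eq_square inner_commute)
    have e3: "w \<bullet> w = w \<bullet> (A *v x) - m * (w \<bullet> x)"
      by (metis w_def inner_diff_right inner_scaleR_right)
    have i: "x \<bullet> (A *v x) + 2 * t * (w \<bullet> (A *v x)) + t^2 * (w \<bullet> (A *v w)) \<le> m * (x \<bullet> x + 2 * t * (w \<bullet> x) + t^2 * (w \<bullet> w))"
      using l1 unfolding e1 e2 .
    show ?thesis unfolding k_def by (rule aux[OF i eq e3])
  qed
  have "w \<bullet> w = 0"
  proof (rule ccontr)
    assume "w \<bullet> w \<noteq> 0"
    then have p: "w \<bullet> w > 0" by (simp add: order_le_neq_trans)
    define t where "t = (w \<bullet> w) / (\<bar>k\<bar> + 1)"
    have t: "t > 0" using p by (simp add: t_def)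
    have t1: "t * (\<bar>k\<bar> + 1) = w \<bullet> w" unfolding t_def by simp
    have "t * \<bar>k\<bar> \<le> t * (\<bar>k\<bar> + 1)" using t by (intro mult_left_mono) auto
    then have "t * \<bar>k\<bar> \<le> w \<bullet> w" using t1 by linarith
    then have "t * (t * \<bar>k\<bar>) \<le> t * (w \<bullet> w)" using t by (intro mult_left_mono) auto
    moreover have "t * (t * (- \<bar>k\<bar>)) \<le> t * (t * k)" using t by (intro mult_left_mono) auto
    moreover have "t^2 * k = t * (t * k)" by (simp only: power2_eq_square mult.assoc)
    ultimately have "t^2 * k \<ge> - t * (w \<bullet> w)" by linarith
    then have "2 * t * (w \<bullet> w) + t^2 * k \<ge> t * (w \<bullet> w)" by simp
    moreover have "t * (w \<bullet> w) > 0" using t p by simp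
    ultimately show False using key[of t] by simp
  qed
  then show ?thesis unfolding w_def by simp
qed

lemma rayleigh:
  fixes A :: "real ^ 'n ^ 'n"
  assumes sym: "\<And>i j. A $ i $ j = A $ j $ i"
  shows "\<exists>m. m \<le> lambda_max A \<and> (\<forall>v. v \<bullet> (A *v v) \<le> m * (v \<bullet> v))"
proof -
  let ?f = "\<lambda>v::real^'n. v \<bullet> (A *v v)"
  have cont: "continuous_on (sphere 0 1) ?f"
    by (intro continuous_intros linear_continuous_on matrix_vector_mul_bounded_linear)
  have ne: "sphere (0::real^'n) 1 \<noteq> {}"
  proof -
    have "axis undefined (1::real) \<in> sphere (0::real^'n) 1" by simp
    then show ?thesis by blast
  qed
  obtain u where u: "u \<in> sphere 0 1" "\<forall>y\<in>sphere 0 1. ?f y \<le> ?f u"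
    using continuous_attains_sup[OF compact_sphere ne cont] by blast
  define m where "m = ?f u"
  have le: "?f v \<le> m * (v \<bullet> v)" for v
  proof (cases "v = 0")
    case True then show ?thesis by simp
  next
    case False
    define w where "w = (1 / norm v) *\<^sub>R v"
    have "w \<in> sphere 0 1" using False by (simp add: w_def)
    then have "?f w \<le> m" using u unfolding m_def by blast
    moreover have "v = norm v *\<^sub>R w" using False by (simp add: w_def)
    have e: "?f (norm v *\<^sub>R w) = (norm v)^2 * ?f w"
      by (simp add: matrix_vector_mult_scaleR power2_eq_square)
    have "(norm v)^2 * ?f w \<le> (norm v)^2 * m"
      using \<open>?f w \<le> m\<close> by (rule mult_left_mono) simp
    then have "?f (norm v *\<^sub>R w) \<le> m * (norm v)^2" using e by (metis mult.commute)
    then show ?thesis using \<open>v = norm v *\<^sub>R w\<close> by (simp add: power2_norm_eq_inner)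
  qed
  have uu: "u \<bullet> u = 1" using u(1) by (simp add: norm_eq_1)
  have eig: "A *v u = m *\<^sub>R u"
    by (rule lagrange[OF sym le]) (simp add: uu m_def)
  let ?uc = "(\<chi> i. complex_of_real (u $ i)) :: complex ^ 'n"
  have "u \<noteq> 0" using u(1) by auto
  then obtain i0 where "u $ i0 \<noteq> 0" by (metis vec_eq_iff zero_index)
  then have "?uc \<noteq> 0" by (metis of_real_eq_0_iff vec_lambda_beta zero_index)
  moreover have "(\<chi> i j. complex_of_real (A $ i $ j)) *v ?uc = complex_of_real m *s ?uc"
  proof -
    have "(\<Sum>j\<in>UNIV. complex_of_real (A $ i $ j) * complex_of_real (u $ j)) = complex_of_real m * complex_of_real (u $ i)" for i
    proof -
      have "(\<Sum>j\<in>UNIV. A $ i $ j * u $ j) = m * u $ i"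
        using arg_cong[OF eig, of "\<lambda>z. z $ i"] by (simp add: matrix_vector_mult_def)
      then show ?thesis by (metis (no_types, lifting) of_real_mult of_real_sum sum.cong)
    qed
    then show ?thesis by (simp add: matrix_vector_mult_def vec_eq_iff)
  qed
  ultimately have "complex_of_real m \<in> eigenvalues_of A" unfolding eigenvalues_of_def by blast
  then have "m \<le> lambda_max A" unfolding lambda_max_def
    using eig_finite[of A] by (metis Max_ge Re_complex_of_real finite_imageI image_eqI)
  then show ?thesis using le by blast
qed




lemma comp_deriv:
  assumes "(x has_vector_derivative X) F"
  shows "((\<lambda>t. x t $ i) has_real_derivative X $ i) F"
  using bounded_linear.has_vector_derivative[OF bounded_linear_vec_nth assms]
  by (simp add: has_real_derivative_iff_has_vector_derivative)

lemma diagm_mult_comp: "(diagm v *v u) $ i = v $ i * u $ i"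
proof -
  have "(diagm v *v u) $ i = (\<Sum>j\<in>UNIV. (if i = j then v $ i else 0) * u $ j)"
    by (simp add: diagm_def matrix_vector_mult_def)
  also have "\<dots> = (\<Sum>j\<in>UNIV. (if j = i then v $ i * u $ j else 0))"
    by (rule sum.cong) auto
  also have "\<dots> = v $ i * u $ i" by simp
  finally show ?thesis .
qed

lemma field_comp:
  "biv_field_x \<beta> \<delta> A x y $ i = \<beta> * ((1 - x $ i - y $ i) * (A *v x) $ i) - \<delta> * x $ i"
  by (simp add: biv_field_x_def diagm_mult_comp)

lemma nn_deriv: "((\<lambda>z::real. (min z 0)^2) has_real_derivative 2 * min z 0) (at z)"
proof (cases "z < 0")
  case True
  have "((\<lambda>z::real. z^2) has_real_derivative 2 * min z 0) (at z)"
    using True by (auto intro!: derivative_eq_intros)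
  then show ?thesis
    by (rule has_field_derivative_transform_within_open[where S="{..<0}"]) (use True in auto)
next
  case False
  show ?thesis
  proof (cases "z > 0")
    case True
    have "((\<lambda>z::real. 0) has_real_derivative 2 * min z 0) (at z)"
      using True by (auto intro!: derivative_eq_intros)
    then show ?thesis
      by (rule has_field_derivative_transform_within_open[where S="{0<..}"]) (use True in auto)
  next
    case False
    then have z: "z = 0" using \<open>\<not> z < 0\<close> by simp
    have b1: "- \<bar>h\<bar> \<le> (min h 0)^2 / h" and b2: "(min h 0)^2 / h \<le> \<bar>h\<bar>" for h :: real
      by (cases "h < 0"; simp add: power2_eq_square min_def)+
    have "((\<lambda>h::real. (min h 0)^2 / h) \<longlongrightarrow> 0) (at 0)"
    proof (rule tendsto_sandwich[where f="\<lambda>h::real. - \<bar>h\<bar>" and h="\<lambda>h::real. \<bar>h\<bar>"])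
      show "\<forall>\<^sub>F h in at 0. - \<bar>h\<bar> \<le> (min h 0)^2 / (h::real)"
        by (rule always_eventually, rule allI, rule b1)
      show "\<forall>\<^sub>F h in at 0. (min h 0)^2 / h \<le> \<bar>h::real\<bar>"
        by (rule always_eventually, rule allI, rule b2)
      show "((\<lambda>h. - \<bar>h\<bar>) \<longlongrightarrow> 0) (at (0::real))"
        by (auto intro!: tendsto_eq_intros)
      show "((\<lambda>h. \<bar>h\<bar>) \<longlongrightarrow> 0) (at (0::real))"
        by (auto intro!: tendsto_eq_intros)
    qed
    then show ?thesis unfolding z DERIV_def by simp
  qed
qed

lemma mono_deriv:
  fixes f :: "real \<Rightarrow> real"
  assumes "a \<le> b" "\<And>t. t \<in> {a..b} \<Longrightarrow> (f has_real_derivative f' t) (at t within {a..b})"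
    "\<And>t. t \<in> {a..b} \<Longrightarrow> f' t \<le> 0"
  shows "f b \<le> f a"
proof -
  obtain c where c: "c \<in> {a..b}" "f b - f a = f' c * (b - a)"
    using mvt_very_simple[OF assms(1), of f "\<lambda>t h. f' t * h"] assms(2)
    by (auto simp: has_field_derivative_def)
  have "f' c * (b - a) \<le> 0" using assms(1) assms(3)[OF c(1)] by (simp add: mult_nonpos_nonneg)
  then show ?thesis using c by simp
qed

lemma gronwall0:
  fixes W :: "real \<Rightarrow> real"
  assumes "0 \<le> T" "\<And>t. t \<in> {0..T} \<Longrightarrow> (W has_real_derivative W' t) (at t within {0..T})"
    "\<And>t. t \<in> {0..T} \<Longrightarrow> W' t \<le> K * W t" "\<And>t. t \<in> {0..T} \<Longrightarrow> W t \<ge> 0" "W 0 = 0"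
    and t: "t \<in> {0..T}"
  shows "W t = 0"
proof -
  define G where "G s = exp (- K * s) * W s" for s
  have "G t \<le> G 0"
  proof (rule mono_deriv[where f=G and a=0 and b=t and f' = "\<lambda>s. exp (- K * s) * W' s - K * exp (- K * s) * W s"])
    show "0 \<le> t" using t by simp
    fix s assume s: "s \<in> {0..t}"
    then have sT: "s \<in> {0..T}" using t by auto
    have d: "(W has_real_derivative W' s) (at s within {0..t})"
      using assms(2)[OF sT] by (rule DERIV_subset) (use t in auto)
    show "(G has_real_derivative exp (- K * s) * W' s - K * exp (- K * s) * W s) (at s within {0..t})"
      unfolding G_def
      by (auto intro!: derivative_eq_intros d simp: algebra_simps)
    have "exp (- K * s) * W' s \<le> exp (- K * s) * (K * W s)"
      using assms(3)[OF sT] by (intro mult_left_mono) auto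
    then show "exp (- K * s) * W' s - K * exp (- K * s) * W s \<le> 0" by (simp add: algebra_simps)
  qed
  then have "exp (- K * t) * W t \<le> 0" using assms(5) by (simp add: G_def)
  then have "W t \<le> 0" by (simp add: mult_le_0_iff)
  then show ?thesis using assms(4)[OF t] by simp
qed




lemma pw: fixes a b w :: real assumes "a^2 \<le> w" "b^2 \<le> w" shows "a * b \<le> w"
proof -
  have "a * b \<le> (a^2 + b^2) / 2" using sum_squares_bound[of a b] by (simp add: power2_eq_square)
  moreover have "(a^2 + b^2) / 2 \<le> w" using assms by simp
  ultimately show ?thesis by (rule order_trans)
qed

lemma nn_sq: "min (a::real) 0 * a = (min a 0)^2"
  by (simp add: min_def power2_eq_square)

lemma h1:
  fixes a s r C :: real
  assumes "C \<ge> 0" "\<bar>s\<bar> \<le> C" "\<bar>r\<bar> \<le> C"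
  shows "min a 0 * s * r \<le> C * (min a 0 * min s 0 + min a 0 * min r 0)"
proof (cases "a < 0")
  case False then show ?thesis using assms by (simp add: min_def)
next
  case a: True
  show ?thesis
  proof (cases "s < 0"; cases "r < 0")
    assume "s < 0" "r < 0"
    have "0 < a * s" using a \<open>s < 0\<close> by (simp add: mult_neg_neg)
    then have "a * s * r \<le> 0" using \<open>r < 0\<close> by (simp add: mult_pos_neg less_imp_le)
    then have "min a 0 * s * r \<le> 0" using a by (simp add: min_def)
    moreover have "0 \<le> C * (min a 0 * min s 0 + min a 0 * min r 0)"
      using assms a \<open>s < 0\<close> \<open>r < 0\<close> by (simp add: min_def mult_nonneg_nonneg mult_neg_neg less_imp_le)
    ultimately show ?thesis by linarith
  next
    assume "s < 0" "\<not> r < 0"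
    then have "a * s * r \<le> a * s * C" using a assms by (intro mult_left_mono) (auto simp: mult_neg_neg less_imp_le)
    moreover have "min a 0 = a" "min s 0 = s" "min r 0 = 0" using a \<open>s < 0\<close> \<open>\<not> r < 0\<close> by auto
    moreover have "a * s * C = C * (a * s + a * 0)" by simp
    ultimately show ?thesis by (simp only:)
  next
    assume "\<not> s < 0" "r < 0"
    then have "a * r * s \<le> a * r * C" using a assms by (intro mult_left_mono) (auto simp: mult_neg_neg less_imp_le)
    moreover have "min a 0 = a" "min s 0 = 0" "min r 0 = r" using a \<open>\<not> s < 0\<close> \<open>r < 0\<close> by auto
    moreover have "a * r * C = C * (a * 0 + a * r)" by simp
    moreover have "a * s * r = a * r * s" by simp
    ultimately show ?thesis by (simp only:)
  next
    assume "\<not> s < 0" "\<not> r < 0"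
    then have "0 \<le> s * r" by simp
    then have "a * (s * r) \<le> 0" using a by (simp add: mult_nonpos_nonneg)
    then show ?thesis using a \<open>\<not> s < 0\<close> \<open>\<not> r < 0\<close> by (simp add: min_def mult.assoc)
  qed
qed

lemma nn_sum:
  fixes a z :: "'n::finite \<Rightarrow> real"
  assumes "\<And>j. 0 \<le> a j \<and> a j \<le> 1"
  shows "(\<Sum>j\<in>UNIV. min (z j) 0) \<le> min (\<Sum>j\<in>UNIV. a j * z j) 0"
proof -
  have e: "min (z j) 0 \<le> a j * z j" for j
  proof (cases "z j < 0")
    case True
    have "(1 - a j) * z j \<le> 0" using assms[of j] True by (simp add: mult_nonneg_nonpos less_imp_le)
    then show ?thesis using True by (simp add: algebra_simps)
  next
    case False then show ?thesis using assms[of j] by simp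
  qed
  have "(\<Sum>j\<in>UNIV. min (z j) 0) \<le> (\<Sum>j\<in>UNIV. a j * z j)" by (rule sum_mono) (rule e)
  moreover have "(\<Sum>j\<in>UNIV. min (z j) 0) \<le> 0" by (rule sum_nonpos) simp
  ultimately show ?thesis by simp
qed

lemma termx:
  fixes \<beta> \<delta> C a s r w N :: real
  assumes "\<beta> \<ge> 0" "\<delta> \<ge> 0" "C \<ge> 0" "\<bar>s\<bar> \<le> C" "\<bar>r\<bar> \<le> C"
    "min a 0 * min s 0 \<le> w" "min a 0 * min r 0 \<le> N * w"
  shows "2 * min a 0 * (\<beta> * (s * r) - \<delta> * a) \<le> 2 * \<beta> * C * (1 + N) * w"
proof -
  have "min a 0 * s * r \<le> C * (w + N * w)"
  proof -
    have "min a 0 * s * r \<le> C * (min a 0 * min s 0 + min a 0 * min r 0)" by (rule h1) (use assms in auto)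
    also have "\<dots> \<le> C * (w + N * w)" using assms by (intro mult_left_mono) auto
    finally show ?thesis .
  qed
  then have "\<beta> * (min a 0 * s * r) \<le> \<beta> * (C * (w + N * w))" using assms by (intro mult_left_mono) auto
  moreover have "0 \<le> \<delta> * (min a 0 * a)" using assms by (simp add: nn_sq)
  ultimately show ?thesis by (simp add: algebra_simps)
qed

lemma terms:
  fixes \<beta>1 \<delta>1 \<beta>2 \<delta>2 C s r q x y w :: real
  assumes "\<beta>1 \<ge> 0" "\<delta>1 \<ge> 0" "\<beta>2 \<ge> 0" "\<delta>2 \<ge> 0" "C \<ge> 0" "\<bar>r\<bar> \<le> C" "\<bar>q\<bar> \<le> C"
    "min s 0 * min x 0 \<le> w" "min s 0 * min y 0 \<le> w" "(min s 0)^2 \<le> w"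
  shows "2 * min s 0 * (- (\<beta>1 * (s * r) - \<delta>1 * x) - (\<beta>2 * (s * q) - \<delta>2 * y))
         \<le> (2 * (\<beta>1 + \<beta>2) * C + 2 * \<delta>1 + 2 * \<delta>2) * w"
proof -
  have w0: "w \<ge> 0" using assms(10) by (metis order_trans zero_le_power2)
  have "- (\<beta>1 * r + \<beta>2 * q) \<le> (\<beta>1 + \<beta>2) * C"
  proof -
    have "- r \<le> C" "- q \<le> C" using assms(6,7) by auto
    have "\<beta>1 * (- r) \<le> \<beta>1 * C" by (rule mult_left_mono) (use \<open>- r \<le> C\<close> assms in auto)
    moreover have "\<beta>2 * (- q) \<le> \<beta>2 * C" by (rule mult_left_mono) (use \<open>- q \<le> C\<close> assms in auto)
    ultimately show ?thesis by (simp add: algebra_simps)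
  qed
  then have t1: "(min s 0)^2 * (- (\<beta>1 * r + \<beta>2 * q)) \<le> (min s 0)^2 * ((\<beta>1 + \<beta>2) * C)"
    by (intro mult_left_mono) auto
  have t1': "(min s 0)^2 * ((\<beta>1 + \<beta>2) * C) \<le> w * ((\<beta>1 + \<beta>2) * C)"
    using assms by (intro mult_right_mono) auto
  have "min s 0 * x \<le> min s 0 * min x 0" by (rule mult_left_mono_neg) auto
  then have t2: "\<delta>1 * (min s 0 * x) \<le> \<delta>1 * w" using assms by (intro mult_left_mono) auto
  have "min s 0 * y \<le> min s 0 * min y 0" by (rule mult_left_mono_neg) auto
  then have t3: "\<delta>2 * (min s 0 * y) \<le> \<delta>2 * w" using assms by (intro mult_left_mono) auto
  have eq: "2 * min s 0 * (- (\<beta>1 * (s * r) - \<delta>1 * x) - (\<beta>2 * (s * q) - \<delta>2 * y))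
     = 2 * ((min s 0 * s) * (- (\<beta>1 * r + \<beta>2 * q))) + 2 * (\<delta>1 * (min s 0 * x)) + 2 * (\<delta>2 * (min s 0 * y))"
    by (simp add: algebra_simps)
  show ?thesis unfolding eq nn_sq using t1 t1' t2 t3 by (simp add: algebra_simps)
qed




lemma cont_from_deriv:
  assumes "\<And>t. t \<ge> 0 \<Longrightarrow> (x has_vector_derivative X t) (at t within {0..})"
  shows "continuous_on {0..T} x"
proof -
  have "continuous_on {0..} x"
    unfolding continuous_on_eq_continuous_within
  proof
    fix t :: real assume "t \<in> {0..}"
    then show "continuous (at t within {0..}) x" using assms[of t] has_vector_derivative_continuous by auto
  qed
  then show ?thesis by (rule continuous_on_subset) auto
qed

lemma bound_on:
  fixes x :: "real \<Rightarrow> 'a::real_normed_vector"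
  assumes "continuous_on {0..T} x"
  obtains M where "M \<ge> 0" "\<And>t. t \<in> {0..T} \<Longrightarrow> norm (x t) \<le> M"
proof -
  have "compact (x ` {0..T})" by (rule compact_continuous_image[OF assms compact_Icc])
  then obtain M where "M > 0" "\<forall>v\<in>x ` {0..T}. norm v \<le> M"
    using compact_imp_bounded bounded_pos by metis
  then show ?thesis using that[of M] by auto
qed

lemma mv_bound:
  fixes A :: "real ^ 'n ^ 'n"
  assumes "\<And>i j. 0 \<le> A $ i $ j \<and> A $ i $ j \<le> 1" "norm v \<le> M"
  shows "\<bar>(A *v v) $ i\<bar> \<le> real CARD('n) * M"
proof -
  have "\<bar>(A *v v) $ i\<bar> = \<bar>\<Sum>j\<in>UNIV. A $ i $ j * v $ j\<bar>" by (simp add: matrix_vector_mult_def)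
  also have "\<dots> \<le> (\<Sum>j\<in>UNIV. \<bar>A $ i $ j * v $ j\<bar>)" by (rule sum_abs)
  also have "\<dots> \<le> (\<Sum>j::'n\<in>UNIV. M)"
  proof (rule sum_mono)
    fix j
    have "\<bar>A $ i $ j * v $ j\<bar> = A $ i $ j * \<bar>v $ j\<bar>" using assms(1)[of i j] by (simp add: abs_mult)
    also have "\<dots> \<le> 1 * \<bar>v $ j\<bar>" using assms(1)[of i j] by (intro mult_right_mono) auto
    also have "\<dots> \<le> M" using component_le_norm_cart[of v j] assms(2) by simp
    finally show "\<bar>A $ i $ j * v $ j\<bar> \<le> M" .
  qed
  also have "\<dots> = real CARD('n) * M" by simp
  finally show ?thesis .
qed

lemma nn_mv:
  fixes A :: "real ^ 'n ^ 'n"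
  assumes "\<And>i j. 0 \<le> A $ i $ j \<and> A $ i $ j \<le> 1" "w \<ge> 0"
    "\<And>j. min a 0 * min (v $ j) 0 \<le> w"
  shows "min a 0 * min ((A *v v) $ i) 0 \<le> real CARD('n) * w"
proof -
  have "(\<Sum>j\<in>UNIV. min (v $ j) 0) \<le> min ((A *v v) $ i) 0"
    unfolding matrix_vector_mult_def using nn_sum[of "\<lambda>j. A $ i $ j" "\<lambda>j. v $ j"] assms(1) by simp
  then have "min a 0 * min ((A *v v) $ i) 0 \<le> min a 0 * (\<Sum>j\<in>UNIV. min (v $ j) 0)"
    by (rule mult_left_mono_neg) simp
  also have "\<dots> = (\<Sum>j\<in>UNIV. min a 0 * min (v $ j) 0)" by (simp add: sum_distrib_left)
  also have "\<dots> \<le> (\<Sum>j::'n\<in>UNIV. w)" by (rule sum_mono) (rule assms(3))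
  finally show ?thesis by simp
qed




lemma invariance:
  fixes A B :: "real ^ 'n ^ 'n" and x y :: "real \<Rightarrow> real ^ 'n"
  assumes A01: "\<And>i j. 0 \<le> A $ i $ j \<and> A $ i $ j \<le> 1"
    and B01: "\<And>i j. 0 \<le> B $ i $ j \<and> B $ i $ j \<le> 1"
    and pos: "\<beta>1 \<ge> 0" "\<delta>1 \<ge> 0" "\<beta>2 \<ge> 0" "\<delta>2 \<ge> 0"
    and init: "(x 0, y 0) \<in> biv_domain"
    and dx: "\<And>t. t \<ge> 0 \<Longrightarrow> (x has_vector_derivative biv_field_x \<beta>1 \<delta>1 A (x t) (y t)) (at t within {0..})"
    and dy: "\<And>t. t \<ge> 0 \<Longrightarrow> (y has_vector_derivative biv_field_x \<beta>2 \<delta>2 B (y t) (x t)) (at t within {0..})"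
    and T: "T \<ge> 0"
  shows "(x T, y T) \<in> biv_domain"
proof -
  define X where "X t = biv_field_x \<beta>1 \<delta>1 A (x t) (y t)" for t
  define Y where "Y t = biv_field_x \<beta>2 \<delta>2 B (y t) (x t)" for t
  define s where "s t i = 1 - x t $ i - y t $ i" for t i
  define r where "r t i = (A *v x t) $ i" for t i
  define q where "q t i = (B *v y t) $ i" for t i
  have Xc: "X t $ i = \<beta>1 * (s t i * r t i) - \<delta>1 * x t $ i" for t i
    by (simp add: X_def field_comp s_def r_def)
  have Yc: "Y t $ i = \<beta>2 * (s t i * q t i) - \<delta>2 * y t $ i" for t i
    by (simp add: Y_def field_comp s_def q_def algebra_simps)
  obtain Mx where Mx: "Mx \<ge> 0" "\<And>t. t \<in> {0..T} \<Longrightarrow> norm (x t) \<le> Mx"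
    using bound_on[OF cont_from_deriv[OF dx]] by blast
  obtain My where My: "My \<ge> 0" "\<And>t. t \<in> {0..T} \<Longrightarrow> norm (y t) \<le> My"
    using bound_on[OF cont_from_deriv[OF dy]] by blast
  define M where "M = max Mx My"
  have M: "M \<ge> 0" "\<And>t. t \<in> {0..T} \<Longrightarrow> norm (x t) \<le> M \<and> norm (y t) \<le> M"
    using Mx My unfolding M_def by force+
  define N where "N = real CARD('n)"
  define C where "C = 1 + 2 * M + N * M"
  have C0: "C \<ge> 0" using M(1) by (simp add: C_def N_def)
  have bnd: "\<bar>s t i\<bar> \<le> C \<and> \<bar>r t i\<bar> \<le> C \<and> \<bar>q t i\<bar> \<le> C" if t: "t \<in> {0..T}" for t i
  proof -
    have xi: "\<bar>x t $ i\<bar> \<le> M" using component_le_norm_cart[of "x t" i] M(2)[OF t] by simp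
    have yi: "\<bar>y t $ i\<bar> \<le> M" using component_le_norm_cart[of "y t" i] M(2)[OF t] by simp
    have "\<bar>r t i\<bar> \<le> N * M" unfolding r_def N_def by (rule mv_bound[OF A01]) (use M(2)[OF t] in auto)
    moreover have "\<bar>q t i\<bar> \<le> N * M" unfolding q_def N_def by (rule mv_bound[OF B01]) (use M(2)[OF t] in auto)
    moreover have "\<bar>s t i\<bar> \<le> 1 + 2 * M" unfolding s_def using xi yi by linarith
    moreover have "N * M \<ge> 0" using M(1) by (simp add: N_def)
    ultimately show ?thesis unfolding C_def using M(1) by linarith
  qed
  define W where "W t = (\<Sum>i\<in>UNIV. (min (x t $ i) 0)^2 + (min (y t $ i) 0)^2 + (min (s t i) 0)^2)" for t
  define W' where "W' t = (\<Sum>i\<in>UNIV. 2 * min (x t $ i) 0 * X t $ i + 2 * min (y t $ i) 0 * Y t $ i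
                         + 2 * min (s t i) 0 * (- X t $ i - Y t $ i))" for t
  have dW: "(W has_real_derivative W' t) (at t within {0..T})" if t: "t \<in> {0..T}" for t
  proof -
    have dx': "(x has_vector_derivative X t) (at t within {0..T})"
      using dx[of t] t unfolding X_def by (auto intro: has_vector_derivative_within_subset)
    have dy': "(y has_vector_derivative Y t) (at t within {0..T})"
      using dy[of t] t unfolding Y_def by (auto intro: has_vector_derivative_within_subset)
    have ex: "((\<lambda>t. (min (x t $ i) 0)^2) has_real_derivative 2 * min (x t $ i) 0 * X t $ i) (at t within {0..T})" for i
      by (rule DERIV_chain'[OF comp_deriv[OF dx'] nn_deriv])
    have ey: "((\<lambda>t. (min (y t $ i) 0)^2) has_real_derivative 2 * min (y t $ i) 0 * Y t $ i) (at t within {0..T})" for i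
      by (rule DERIV_chain'[OF comp_deriv[OF dy'] nn_deriv])
    have ds: "((\<lambda>t. s t i) has_real_derivative - X t $ i - Y t $ i) (at t within {0..T})" for i
    proof -
      have "((\<lambda>t. 1 - x t $ i - y t $ i) has_real_derivative 0 - X t $ i - Y t $ i) (at t within {0..T})"
        by (intro DERIV_diff DERIV_const comp_deriv dx' dy')
      then show ?thesis unfolding s_def by simp
    qed
    have es: "((\<lambda>t. (min (s t i) 0)^2) has_real_derivative 2 * min (s t i) 0 * (- X t $ i - Y t $ i)) (at t within {0..T})" for i
      by (rule DERIV_chain'[OF ds nn_deriv])
    show ?thesis unfolding W_def W'_def
      by (intro DERIV_sum DERIV_add ex ey es)
  qed
  define K0 where "K0 = 2 * \<beta>1 * C * (1 + N) + 2 * \<beta>2 * C * (1 + N) + (2 * (\<beta>1 + \<beta>2) * C + 2 * \<delta>1 + 2 * \<delta>2)"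
  have W0: "W t \<ge> 0" for t unfolding W_def by (intro sum_nonneg) auto
  have sq: "(min (x t $ j) 0)^2 \<le> W t" "(min (y t $ j) 0)^2 \<le> W t" "(min (s t j) 0)^2 \<le> W t" for t j
  proof -
    let ?F = "\<lambda>i. (min (x t $ i) 0)^2 + (min (y t $ i) 0)^2 + (min (s t i) 0)^2"
    have "?F j \<le> W t" unfolding W_def by (rule member_le_sum) auto
    then show "(min (x t $ j) 0)^2 \<le> W t" "(min (y t $ j) 0)^2 \<le> W t" "(min (s t j) 0)^2 \<le> W t"
      by (smt (verit) zero_le_power2)+
  qed
  have W'le: "W' t \<le> (N * K0) * W t" if t: "t \<in> {0..T}" for t
  proof -
    have per: "2 * min (x t $ i) 0 * X t $ i + 2 * min (y t $ i) 0 * Y t $ i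
                + 2 * min (s t i) 0 * (- X t $ i - Y t $ i) \<le> K0 * W t" for i
    proof -
      have a: "2 * min (x t $ i) 0 * X t $ i \<le> 2 * \<beta>1 * C * (1 + N) * W t"
        unfolding Xc
      proof (rule termx)
        show "min (x t $ i) 0 * min (s t i) 0 \<le> W t" by (rule pw) (rule sq)+
        show "min (x t $ i) 0 * min (r t i) 0 \<le> N * W t"
          unfolding r_def N_def by (rule nn_mv[OF A01 W0]) (rule pw; rule sq)
      qed (use pos C0 bnd[OF t] in auto)
      have b: "2 * min (y t $ i) 0 * Y t $ i \<le> 2 * \<beta>2 * C * (1 + N) * W t"
        unfolding Yc
      proof (rule termx)
        show "min (y t $ i) 0 * min (s t i) 0 \<le> W t" by (rule pw) (rule sq)+
        show "min (y t $ i) 0 * min (q t i) 0 \<le> N * W t"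
          unfolding q_def N_def by (rule nn_mv[OF B01 W0]) (rule pw; rule sq)
      qed (use pos C0 bnd[OF t] in auto)
      have c: "2 * min (s t i) 0 * (- X t $ i - Y t $ i) \<le> (2 * (\<beta>1 + \<beta>2) * C + 2 * \<delta>1 + 2 * \<delta>2) * W t"
        unfolding Xc Yc
      proof (rule terms)
        show "min (s t i) 0 * min (x t $ i) 0 \<le> W t" by (rule pw) (rule sq)+
        show "min (s t i) 0 * min (y t $ i) 0 \<le> W t" by (rule pw) (rule sq)+
      qed (use pos C0 bnd[OF t] sq in auto)
      show ?thesis using a b c unfolding K0_def by (simp add: algebra_simps)
    qed
    have "W' t \<le> (\<Sum>i\<in>(UNIV::'n set). K0 * W t)" unfolding W'_def by (rule sum_mono) (rule per)
    also have "\<dots> = (N * K0) * W t" by (simp add: N_def)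
    finally show ?thesis .
  qed
  have Winit: "W 0 = 0"
    unfolding W_def
  proof (intro sum.neutral ballI)
    fix i
    have h: "0 \<le> x 0 $ i \<and> 0 \<le> y 0 $ i \<and> x 0 $ i + y 0 $ i \<le> 1"
      using init unfolding biv_domain_def by auto
    then show "(min (x 0 $ i) 0)^2 + (min (y 0 $ i) 0)^2 + (min (s 0 i) 0)^2 = 0"
      unfolding s_def by (simp add: min_def)
  qed
  have "W T = 0"
    by (rule gronwall0[OF T dW W'le W0 Winit]) (use T in auto)
  then have z: "min (x T $ i) 0 = 0 \<and> min (y T $ i) 0 = 0 \<and> min (s T i) 0 = 0" for i
    using sq[of T i] by auto
  have "\<forall>i. 0 \<le> x T $ i \<and> x T $ i \<le> 1 \<and> 0 \<le> y T $ i \<and> y T $ i \<le> 1 \<and> x T $ i + y T $ i \<le> 1"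
  proof
    fix i
    show "0 \<le> x T $ i \<and> x T $ i \<le> 1 \<and> 0 \<le> y T $ i \<and> y T $ i \<le> 1 \<and> x T $ i + y T $ i \<le> 1"
      using z[of i] unfolding s_def by (auto simp: min_def split: if_splits)
  qed
  then show ?thesis unfolding biv_domain_def by simp
qed




lemma Fpos:
  fixes A :: "real ^ 'n ^ 'n"
  assumes sym: "\<And>i j. A $ i $ j = A $ j $ i" and A01: "\<And>i j. 0 \<le> A $ i $ j \<and> A $ i $ j \<le> 1"
    and le: "\<And>v. v \<bullet> (A *v v) \<le> m * (v \<bullet> v)" and mr: "m \<le> \<rho>" and r0: "\<rho> > 0"
    and z0: "\<And>i. 0 \<le> z $ i" and zz: "z \<bullet> z > 0"
  shows "\<rho> * (z \<bullet> z) - z \<bullet> (A *v z) + (\<Sum>i\<in>UNIV. (z $ i)^2 * (A *v z) $ i) > 0"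
proof (rule ccontr)
  assume "\<not> ?thesis"
  then have F: "\<rho> * (z \<bullet> z) - z \<bullet> (A *v z) + (\<Sum>i\<in>UNIV. (z $ i)^2 * (A *v z) $ i) \<le> 0" by simp
  have Az0: "0 \<le> (A *v z) $ i" for i
    unfolding matrix_vector_mult_def using A01 z0 by (auto intro!: sum_nonneg)
  have t3: "0 \<le> (\<Sum>i\<in>UNIV. (z $ i)^2 * (A *v z) $ i)" using Az0 by (auto intro!: sum_nonneg)
  have t2: "0 \<le> m * (z \<bullet> z) - z \<bullet> (A *v z)" using le[of z] by simp
  have t1: "0 \<le> (\<rho> - m) * (z \<bullet> z)" using mr zz by simp
  have eqs: "\<rho> * (z \<bullet> z) - z \<bullet> (A *v z) = (\<rho> - m) * (z \<bullet> z) + (m * (z \<bullet> z) - z \<bullet> (A *v z))"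
    by (simp add: algebra_simps)
  have "(\<rho> - m) * (z \<bullet> z) = 0" using F t1 t2 t3 eqs by linarith
  then have rm: "\<rho> = m" using zz by simp
  have "m * (z \<bullet> z) - z \<bullet> (A *v z) = 0" using F t1 t2 t3 eqs by linarith
  then have "A *v z = m *\<^sub>R z" by (intro lagrange[OF sym le]) simp
  then have Azi: "(A *v z) $ i = m * z $ i" for i by simp
  have "(z $ i)^2 * (A *v z) $ i = m * (z $ i)^3" for i
    unfolding Azi by (simp add: eval_nat_numeral ac_simps)
  then have "(\<Sum>i\<in>UNIV. (z $ i)^2 * (A *v z) $ i) = (\<Sum>i\<in>UNIV. m * (z $ i)^3)" by simp
  moreover have "(\<Sum>i\<in>UNIV. m * (z $ i)^3) > 0"
  proof -
    have "z \<noteq> 0" using zz by auto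
    then obtain i0 where "z $ i0 \<noteq> 0" by (metis vec_eq_iff zero_index)
    then have "z $ i0 > 0" using z0[of i0] by simp
    then have "m * (z $ i0)^3 > 0" using rm r0 by simp
    moreover have "0 \<le> m * (z $ i)^3" for i using rm r0 z0[of i] by simp
    ultimately show ?thesis by (intro sum_pos2[of UNIV i0]) auto
  qed
  ultimately show False using F t1 t2 t3 eqs by linarith
qed




lemma conv_x:
  fixes A :: "real ^ 'n ^ 'n" and x y :: "real \<Rightarrow> real ^ 'n"
  assumes sym: "\<And>i j. A $ i $ j = A $ j $ i" and A01: "\<And>i j. 0 \<le> A $ i $ j \<and> A $ i $ j \<le> 1"
    and b0: "\<beta> > 0" and d0: "\<delta> > 0" and lam: "(\<beta> / \<delta>) * lambda_max A \<le> 1"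
    and dom: "\<And>t. t \<ge> 0 \<Longrightarrow> (x t, y t) \<in> biv_domain"
    and dx: "\<And>t. t \<ge> 0 \<Longrightarrow> (x has_vector_derivative biv_field_x \<beta> \<delta> A (x t) (y t)) (at t within {0..})"
  shows "(x \<longlongrightarrow> 0) at_top"
proof -
  obtain m where m: "m \<le> lambda_max A" "\<And>v. v \<bullet> (A *v v) \<le> m * (v \<bullet> v)"
    using rayleigh[OF sym] by blast
  define \<rho> where "\<rho> = \<delta> / \<beta>"
  have r0: "\<rho> > 0" using b0 d0 by (simp add: \<rho>_def)
  have "lambda_max A \<le> \<rho>"
  proof -
    have "\<beta> * lambda_max A \<le> \<delta>" using lam b0 d0 by (simp add: field_simps)
    then show ?thesis unfolding \<rho>_def using b0 by (simp add: field_simps)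
  qed
  then have mr: "m \<le> \<rho>" using m(1) by simp
  define F where "F z = \<rho> * (z \<bullet> z) - z \<bullet> (A *v z) + (\<Sum>i\<in>UNIV. (z $ i)^2 * (A *v z) $ i)" for z :: "real ^ 'n"
  define X where "X t = biv_field_x \<beta> \<delta> A (x t) (y t)" for t
  define V where "V t = x t \<bullet> x t" for t
  have domi: "0 \<le> x t $ i \<and> x t $ i \<le> 1 \<and> 0 \<le> y t $ i \<and> y t $ i \<le> 1 \<and> x t $ i + y t $ i \<le> 1" if "t \<ge> 0" for t i
    using dom[OF that] unfolding biv_domain_def by auto
  have dV: "(V has_real_derivative 2 * (x t \<bullet> X t)) (at t within S)" if "t \<ge> 0" "S \<subseteq> {0..}" for t S
  proof -
    have d: "(x has_vector_derivative X t) (at t within S)"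
      using dx[OF that(1)] that(2) unfolding X_def by (rule has_vector_derivative_within_subset)
    have "((\<lambda>t. x t \<bullet> x t) has_vector_derivative (x t \<bullet> X t + X t \<bullet> x t)) (at t within S)"
      by (rule bounded_bilinear.has_vector_derivative[OF bounded_bilinear_inner d d])
    then show ?thesis unfolding V_def
      by (simp add: has_real_derivative_iff_has_vector_derivative inner_commute)
  qed
  have V'le: "x t \<bullet> X t \<le> - \<beta> * F (x t)" if t: "t \<ge> 0" for t
  proof -
    define r where "r i = (A *v x t) $ i" for i
    have r0: "0 \<le> r i" for i
      unfolding r_def matrix_vector_mult_def using A01 domi[OF t] by (auto intro!: sum_nonneg)
    have "x t \<bullet> X t = (\<Sum>i\<in>UNIV. x t $ i * (\<beta> * ((1 - x t $ i - y t $ i) * r i) - \<delta> * x t $ i))"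
      unfolding X_def inner_vec_def field_comp r_def by simp
    also have "\<dots> = \<beta> * (\<Sum>i\<in>UNIV. x t $ i * r i) - \<beta> * (\<Sum>i\<in>UNIV. (x t $ i)^2 * r i)
        - \<beta> * (\<Sum>i\<in>UNIV. x t $ i * y t $ i * r i) - \<delta> * (\<Sum>i\<in>UNIV. x t $ i * x t $ i)"
      by (simp add: sum_distrib_left sum_subtractf[symmetric] power2_eq_square algebra_simps)
    also have "\<dots> \<le> \<beta> * (\<Sum>i\<in>UNIV. x t $ i * r i) - \<beta> * (\<Sum>i\<in>UNIV. (x t $ i)^2 * r i)
        - \<delta> * (\<Sum>i\<in>UNIV. x t $ i * x t $ i)"
    proof -
      have "0 \<le> (\<Sum>i\<in>UNIV. x t $ i * y t $ i * r i)" using domi[OF t] r0 by (auto intro!: sum_nonneg)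
      then have "0 \<le> \<beta> * (\<Sum>i\<in>UNIV. x t $ i * y t $ i * r i)" using b0 by simp
      then show ?thesis by linarith
    qed
    also have "\<dots> = - \<beta> * F (x t)"
      unfolding F_def \<rho>_def r_def using b0 by (simp add: inner_vec_def algebra_simps)
    finally show ?thesis .
  qed
  have Vmono: "V b \<le> V a" if "0 \<le> a" "a \<le> b" for a b
  proof (rule mono_deriv[where f=V and a=a and b=b and f' = "\<lambda>t. 2 * (x t \<bullet> X t)"])
    show "a \<le> b" by fact
    fix t assume t: "t \<in> {a..b}"
    then show "(V has_real_derivative 2 * (x t \<bullet> X t)) (at t within {a..b})"
      using that by (intro dV) auto
    have "F (x t) \<ge> 0"
    proof (cases "x t \<bullet> x t > 0")
      case True
      then show ?thesis unfolding F_def using Fpos[OF sym A01 m(2) mr r0, of "x t"] domi[of t] t that by auto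
    next
      case False
      then have "x t = 0" by (metis inner_gt_zero_iff)
      then show ?thesis unfolding F_def by simp
    qed
    then have "0 \<le> \<beta> * F (x t)" using b0 by simp
    moreover have "x t \<bullet> X t \<le> - \<beta> * F (x t)" using V'le[of t] t that by simp
    ultimately show "2 * (x t \<bullet> X t) \<le> 0" by linarith
  qed
  have small: "\<exists>T\<ge>0. V T < \<epsilon>" if e: "\<epsilon> > 0" for \<epsilon>
  proof (rule ccontr)
    assume "\<not> ?thesis"
    then have big: "V t \<ge> \<epsilon>" if "t \<ge> 0" for t using that by force
    define KS where "KS = {z :: real ^ 'n. (\<forall>i. 0 \<le> z $ i \<and> z $ i \<le> 1)} \<inter> {z. \<epsilon> \<le> z \<bullet> z}"
    have "{z :: real ^ 'n. (\<forall>i. 0 \<le> z $ i \<and> z $ i \<le> 1)} = cbox 0 1"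
      by (auto simp: mem_box_cart)
    then have cK: "compact KS" unfolding KS_def
      by (auto intro!: compact_Int_closed closed_Collect_le continuous_intros)
    have xK: "x t \<in> KS" if "t \<ge> 0" for t
      using domi[OF that] big[OF that] unfolding KS_def V_def by auto
    then have neK: "KS \<noteq> {}" by blast
    have cF: "continuous_on KS F" unfolding F_def
      by (intro continuous_intros linear_continuous_on matrix_vector_mul_bounded_linear bounded_linear_vec_nth
          bounded_linear_compose[OF bounded_linear_vec_nth matrix_vector_mul_bounded_linear])
    obtain z where z: "z \<in> KS" "\<And>w. w \<in> KS \<Longrightarrow> F z \<le> F w"
      using continuous_attains_inf[OF cK neK cF] by blast
    define \<mu> where "\<mu> = F z"
    have mu: "\<mu> > 0" unfolding \<mu>_def F_def
      by (rule Fpos[OF sym A01 m(2) mr r0]) (use z(1) e in \<open>auto simp: KS_def\<close>)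
    have lin: "V t + 2 * \<beta> * \<mu> * t \<le> V 0" if t: "t \<ge> 0" for t
    proof -
      have "(\<lambda>s. V s + 2 * \<beta> * \<mu> * s) t \<le> (\<lambda>s. V s + 2 * \<beta> * \<mu> * s) 0"
      proof (rule mono_deriv[where f="\<lambda>s. V s + 2 * \<beta> * \<mu> * s" and a=0 and b=t and f' = "\<lambda>s. 2 * (x s \<bullet> X s) + 2 * \<beta> * \<mu>"])
        show "0 \<le> t" by fact
        fix s assume s: "s \<in> {0..t}"
        show "((\<lambda>s. V s + 2 * \<beta> * \<mu> * s) has_real_derivative 2 * (x s \<bullet> X s) + 2 * \<beta> * \<mu>) (at s within {0..t})"
          using s by (auto intro!: derivative_eq_intros dV)
        have "\<mu> \<le> F (x s)" unfolding \<mu>_def using z(2) xK s by auto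
        then have "\<beta> * \<mu> \<le> \<beta> * F (x s)" using b0 by simp
        then show "2 * (x s \<bullet> X s) + 2 * \<beta> * \<mu> \<le> 0" using V'le[of s] s by auto
      qed
      then show ?thesis by simp
    qed
    define t where "t = (V 0 + 1) / (2 * \<beta> * \<mu>)"
    have "V 0 \<ge> 0" unfolding V_def by simp
    then have t0: "t \<ge> 0" unfolding t_def using b0 mu by simp
    have "2 * \<beta> * \<mu> * t = V 0 + 1" unfolding t_def using b0 mu by simp
    then have "V t \<le> -1" using lin[OF t0] by linarith
    moreover have "V t \<ge> 0" unfolding V_def by simp
    ultimately show False by simp
  qed
  show ?thesis
  proof (rule tendstoI)
    fix e :: real assume e: "e > 0"
    obtain T where T: "T \<ge> 0" "V T < e^2" using small[of "e^2"] e by auto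
    have "dist (x t) 0 < e" if "t \<ge> T" for t
    proof -
      have "V t < e^2" using Vmono[of T t] T that by simp
      then have "(norm (x t))^2 < e^2" unfolding V_def by (simp add: power2_norm_eq_inner)
      then show ?thesis using e by (simp add: power_less_imp_less_base)
    qed
    then show "\<forall>\<^sub>F t in at_top. dist (x t) 0 < e" by (auto simp: eventually_at_top_linorder)
  qed
qed



lemma dom_swap: "(a, b) \<in> biv_domain \<Longrightarrow> (b, a) \<in> biv_domain"
  unfolding biv_domain_def by (auto simp: add.commute)

lemma adj_props:
  assumes "undirected_adjacency A"
  shows "\<And>i j. A $ i $ j = A $ j $ i" "\<And>i j. 0 \<le> A $ i $ j \<and> A $ i $ j \<le> 1"
  using assms unfolding undirected_adjacency_def by (metis order_refl zero_le_one)+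

theorem theorem2:
  fixes A B :: "real ^ 'n ^ 'n"
    and \<beta>1 \<delta>1 \<beta>2 \<delta>2 :: real
    and x y :: "real \<Rightarrow> real ^ 'n"
  assumes "undirected_adjacency A" and "connected_adjacency A"
    and "undirected_adjacency B" and "connected_adjacency B"
    and "\<beta>1 > 0" and "\<delta>1 > 0" and "\<beta>2 > 0" and "\<delta>2 > 0"
    and "(\<beta>1 / \<delta>1) * lambda_max A \<le> 1"
    and "(\<beta>2 / \<delta>2) * lambda_max B \<le> 1"
    and "(x 0, y 0) \<in> biv_domain"
    and "\<And>t. t \<ge> 0 \<Longrightarrow>
           (x has_vector_derivative biv_field_x \<beta>1 \<delta>1 A (x t) (y t)) (at t within {0..})"
    and "\<And>t. t \<ge> 0 \<Longrightarrow>
           (y has_vector_derivative biv_field_x \<beta>2 \<delta>2 B (y t) (x t)) (at t within {0..})"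
  shows "((\<lambda>t. (x t, y t)) \<longlongrightarrow> (0, 0)) at_top"
proof -
  note a = adj_props[OF assms(1)] and b = adj_props[OF assms(3)]
  have dom: "(x t, y t) \<in> biv_domain" if "t \<ge> 0" for t
    by (rule invariance[OF a(2) b(2) _ _ _ _ assms(11,12,13) that]) (use assms(5-8) in auto)
  have cx: "(x \<longlongrightarrow> 0) at_top"
    by (rule conv_x[OF a(1) a(2) assms(5,6,9) dom assms(12)])
  have cy: "(y \<longlongrightarrow> 0) at_top"
    by (rule conv_x[OF b(1) b(2) assms(7,8,10) dom_swap[OF dom] assms(13)])
  show ?thesis by (rule tendsto_Pair[OF cx cy])
qed

end
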